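(* For all $x \in \mathcal{X}$ and $y \in \mathcal{Y}$, $P_{Y|X}(y|x) = P^{(k^* )}_{Y|X}(y|x)$, and consequently $\hat y^{(k^* )}(x) = \hat y_{\mathrm{MAP}}(x)$, where $\hat y_{\mathrm{MAP}}(x) = \arg\max_{y \in \mathcal{Y}} P_{Y|X}(y|x)$.
   Context: $X, Y$ are random variables on finite alphabets with joint distribution $P_{X,Y}$. By the modal decomposition, $P_{X,Y}(x,y) = P_X(x) P_Y(y)\left(1 + \sum_{i=1}^K \sigma_i f_i^*(x) g_i^*(y)\right)$ with $\sigma_1 \ge \dots \ge \sigma_K > 0$ and $\mathbb{E}[f_i^*(X) f_j^*(X)] = \mathbb{E}[g_i^*(Y) g_j^*(Y)] = \mathbb{1}\{i=j\}$; let $f^* = (f_1^*,\dots,f_K^* )^T$. The maximal correlation kernel is $k^*(x,x') = f^{*T}(x)\Lambda_{f^*}^{-1} f^*(x')$, the projection kernel of $\mathrm{span}\{f^*\}$, where $\Lambda_{f^*} = \mathbb{E}[f^*(X) f^{*T}(X)]$. For a kernel $k$, the centered kernel is $\tilde k(x,x') = k(x,x') - \bar k(x) - \bar k(x') + \mathbb{E}_{P_X}[\bar k(X)]$ with $\bar k(x) = \mathbb{E}_{P_X}[k(X,x)]$; the kernelized discriminative model is $P^{(k)}_{Y|X}(y|x) = P_Y(y)\left(1 + \mathbb{E}[\tilde k(X, x) \mid Y = y]\right)$, and $\hat y^{(k)}(x) = \arg\max_{y} P^{(k)}_{Y|X}(y|x)$. *)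

theory Defs
  imports "HOL-Analysis.Analysis" "Jordan_Normal_Form.Gauss_Jordan_Elimination"
begin

definition margX :: "('x::finite \<Rightarrow> 'y::finite \<Rightarrow> real) \<Rightarrow> 'x \<Rightarrow> real" where
  "margX P x = (\<Sum>y\<in>UNIV. P x y)"

definition margY :: "('x::finite \<Rightarrow> 'y::finite \<Rightarrow> real) \<Rightarrow> 'y \<Rightarrow> real" where
  "margY P y = (\<Sum>x\<in>UNIV. P x y)"

definition expX :: "('x::finite \<Rightarrow> 'y::finite \<Rightarrow> real) \<Rightarrow> ('x \<Rightarrow> real) \<Rightarrow> real" where
  "expX P h = (\<Sum>x\<in>UNIV. margX P x * h x)"

definition expY :: "('x::finite \<Rightarrow> 'y::finite \<Rightarrow> real) \<Rightarrow> ('y \<Rightarrow> real) \<Rightarrow> real" where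
  "expY P h = (\<Sum>y\<in>UNIV. margY P y * h y)"

definition condExpX :: "('x::finite \<Rightarrow> 'y::finite \<Rightarrow> real) \<Rightarrow> ('x \<Rightarrow> real) \<Rightarrow> 'y \<Rightarrow> real" where
  "condExpX P h y = (\<Sum>x\<in>UNIV. P x y / margY P y * h x)"

definition condYX :: "('x::finite \<Rightarrow> 'y::finite \<Rightarrow> real) \<Rightarrow> 'y \<Rightarrow> 'x \<Rightarrow> real" where
  "condYX P y x = P x y / margX P x"

(* Modal decomposition of P with K modes, singular values \<sigma>_1..\<sigma>_K (indexed 0..K-1),
   and feature functions f_i, g_i *)
definition modal_decomposition ::
  "('x::finite \<Rightarrow> 'y::finite \<Rightarrow> real) \<Rightarrow> nat \<Rightarrow> (nat \<Rightarrow> real) \<Rightarrow> (nat \<Rightarrow> 'x \<Rightarrow> real)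
     \<Rightarrow> (nat \<Rightarrow> 'y \<Rightarrow> real) \<Rightarrow> bool" where
  "modal_decomposition P K \<sigma> f g \<longleftrightarrow>
     (\<forall>x y. P x y = margX P x * margY P y * (1 + (\<Sum>i<K. \<sigma> i * f i x * g i y))) \<and>
     (\<forall>i j. i \<le> j \<longrightarrow> j < K \<longrightarrow> \<sigma> j \<le> \<sigma> i) \<and>
     (\<forall>i<K. \<sigma> i > 0) \<and>
     (\<forall>i<K. \<forall>j<K. expX P (\<lambda>x. f i x * f j x) = (if i = j then 1 else 0)) \<and>
     (\<forall>i<K. \<forall>j<K. expY P (\<lambda>y. g i y * g j y) = (if i = j then 1 else 0))"

definition Lambda_f :: "('x::finite \<Rightarrow> 'y::finite \<Rightarrow> real) \<Rightarrow> nat \<Rightarrow> (nat \<Rightarrow> 'x \<Rightarrow> real) \<Rightarrow> real mat" where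
  "Lambda_f P K f = mat K K (\<lambda>(i, j). expX P (\<lambda>x. f i x * f j x))"

definition feat_vec :: "nat \<Rightarrow> (nat \<Rightarrow> 'x \<Rightarrow> real) \<Rightarrow> 'x \<Rightarrow> real vec" where
  "feat_vec K f x = vec K (\<lambda>i. f i x)"

definition max_corr_kernel ::
  "('x::finite \<Rightarrow> 'y::finite \<Rightarrow> real) \<Rightarrow> nat \<Rightarrow> (nat \<Rightarrow> 'x \<Rightarrow> real) \<Rightarrow> 'x \<Rightarrow> 'x \<Rightarrow> real" where
  "max_corr_kernel P K f x x' =
     feat_vec K f x \<bullet> (the (mat_inverse (Lambda_f P K f)) *\<^sub>v feat_vec K f x')"

definition kbar :: "('x::finite \<Rightarrow> 'y::finite \<Rightarrow> real) \<Rightarrow> ('x \<Rightarrow> 'x \<Rightarrow> real) \<Rightarrow> 'x \<Rightarrow> real" where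
  "kbar P k x = expX P (\<lambda>x0. k x0 x)"

definition centered_kernel ::
  "('x::finite \<Rightarrow> 'y::finite \<Rightarrow> real) \<Rightarrow> ('x \<Rightarrow> 'x \<Rightarrow> real) \<Rightarrow> 'x \<Rightarrow> 'x \<Rightarrow> real" where
  "centered_kernel P k x x' = k x x' - kbar P k x - kbar P k x' + expX P (kbar P k)"

definition kernel_model ::
  "('x::finite \<Rightarrow> 'y::finite \<Rightarrow> real) \<Rightarrow> ('x \<Rightarrow> 'x \<Rightarrow> real) \<Rightarrow> 'y \<Rightarrow> 'x \<Rightarrow> real" where
  "kernel_model P k y x = margY P y * (1 + condExpX P (\<lambda>x0. centered_kernel P k x0 x) y)"

definition argmax_set :: "('y \<Rightarrow> real) \<Rightarrow> 'y set" where
  "argmax_set Q = {y. \<forall>y'. Q y' \<le> Q y}"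

end

theory Submission
  imports Defs
begin

lemma inv_one: "the (mat_inverse (1\<^sub>m K :: real mat)) = 1\<^sub>m K"
proof -
  have U: "(1\<^sub>m K :: real mat) \<in> Units (ring_mat TYPE(real) K ())"
    unfolding Units_def by (auto simp: ring_mat_simps intro!: bexI[of _ "1\<^sub>m K"])
  have "mat_inverse (1\<^sub>m K :: real mat) \<noteq> None"
    using mat_inverse(1)[of "1\<^sub>m K :: real mat" K "()"] U by auto
  then obtain B where B: "mat_inverse (1\<^sub>m K :: real mat) = Some B" by auto
  from mat_inverse(2)[OF one_carrier_mat B] have "1\<^sub>m K * B = 1\<^sub>m K" "B \<in> carrier_mat K K" by auto
  then have "B = 1\<^sub>m K" by simp
  with B show ?thesis by simp
qed

lemma swap_helper:
  fixes c :: "'i \<Rightarrow> real"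
  shows "(\<Sum>x\<in>A. \<Sum>i\<in>B. c i * h i x) = (\<Sum>i\<in>B. c i * (\<Sum>x\<in>A. h i x))"
  by (subst sum.swap) (simp add: sum_distrib_left)

theorem mainTheorem4:
  fixes P :: "'x::finite \<Rightarrow> 'y::finite \<Rightarrow> real"
    and K :: nat and \<sigma> :: "nat \<Rightarrow> real"
    and f :: "nat \<Rightarrow> 'x \<Rightarrow> real" and g :: "nat \<Rightarrow> 'y \<Rightarrow> real"
  assumes nonneg: "\<And>x y. P x y \<ge> 0"
    and total: "(\<Sum>x\<in>UNIV. \<Sum>y\<in>UNIV. P x y) = 1"
    and posX: "\<And>x. margX P x > 0"
    and posY: "\<And>y. margY P y > 0"
    and modal: "modal_decomposition P K \<sigma> f g"
  shows "(\<forall>x y. condYX P y x = kernel_model P (max_corr_kernel P K f) y x) \<and>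
         (\<forall>x. argmax_set (\<lambda>y. kernel_model P (max_corr_kernel P K f) y x)
               = argmax_set (\<lambda>y. condYX P y x))"
proof -
  define M where "M = margX P"
  define N where "N = margY P"
  have dec: "\<And>x y. P x y = M x * N y * (1 + (\<Sum>i<K. \<sigma> i * f i x * g i y))"
    using modal unfolding modal_decomposition_def M_def N_def by auto
  have spos: "\<And>i. i < K \<Longrightarrow> \<sigma> i > 0"
    using modal unfolding modal_decomposition_def by auto
  have orth: "\<And>i j. i < K \<Longrightarrow> j < K \<Longrightarrow> (\<Sum>x\<in>UNIV. M x * (f i x * f j x)) = (if i = j then 1 else 0)"
    using modal unfolding modal_decomposition_def expX_def M_def by auto
  have sumN: "(\<Sum>y\<in>UNIV. N y) = 1"
    using total unfolding N_def margY_def by (subst sum.swap) simp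
  have sumM: "(\<Sum>x\<in>UNIV. M x) = 1"
    using total unfolding M_def margX_def by simp
  define Ef where "Ef i = (\<Sum>x\<in>UNIV. M x * f i x)" for i
  have Z: "(\<Sum>i<K. \<sigma> i * Ef i * g i y) = 0" for y
  proof -
    have "N y = (\<Sum>x\<in>UNIV. P x y)" unfolding N_def margY_def ..
    also have "\<dots> = (\<Sum>x\<in>UNIV. N y * M x + N y * (\<Sum>i<K. (\<sigma> i * g i y) * (M x * f i x)))"
      by (rule sum.cong, simp, subst dec) (simp add: algebra_simps sum_distrib_left)
    also have "\<dots> = N y * (\<Sum>x\<in>UNIV. M x) + N y * (\<Sum>i<K. (\<sigma> i * g i y) * Ef i)"
      by (simp only: sum.distrib sum_distrib_left[symmetric] swap_helper Ef_def)
    also have "(\<Sum>i<K. (\<sigma> i * g i y) * Ef i) = (\<Sum>i<K. \<sigma> i * Ef i * g i y)"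
      by (simp add: mult_ac)
    finally show ?thesis using sumM posY[of y] unfolding N_def by simp
  qed
  have orthg: "\<And>i j. i < K \<Longrightarrow> j < K \<Longrightarrow> (\<Sum>y\<in>UNIV. N y * (g i y * g j y)) = (if i = j then 1 else 0)"
    using modal unfolding modal_decomposition_def expY_def N_def by auto
  have Ef0: "Ef j = 0" if j: "j < K" for j
  proof -
    have "0 = (\<Sum>y\<in>UNIV. N y * g j y * (\<Sum>i<K. \<sigma> i * Ef i * g i y))" using Z by simp
    also have "\<dots> = (\<Sum>i<K. \<sigma> i * Ef i * (\<Sum>y\<in>UNIV. N y * (g i y * g j y)))"
    proof -
      have "(\<Sum>y\<in>UNIV. N y * g j y * (\<Sum>i<K. \<sigma> i * Ef i * g i y)) = (\<Sum>y\<in>UNIV. \<Sum>i<K. (\<sigma> i * Ef i) * (N y * (g i y * g j y)))"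
        by (rule sum.cong[OF refl]) (simp add: sum_distrib_left mult_ac)
      then show ?thesis by (simp only: swap_helper)
    qed
    also have "\<dots> = (\<Sum>i<K. if i = j then \<sigma> i * Ef i else 0)"
      by (rule sum.cong) (auto simp: orthg j)
    also have "\<dots> = \<sigma> j * Ef j" using j by (simp add: sum.delta)
    finally show ?thesis using spos[OF j] by simp
  qed
  have Lam: "Lambda_f P K f = 1\<^sub>m K"
    unfolding Lambda_f_def
    by (rule eq_matI) (auto simp: expX_def M_def[symmetric] orth)
  have ker: "max_corr_kernel P K f x x' = (\<Sum>i<K. f i x * f i x')" for x x'
    unfolding max_corr_kernel_def Lam inv_one feat_vec_def
    by (simp add: scalar_prod_def lessThan_atLeast0)
  have kb: "kbar P (max_corr_kernel P K f) x = 0" for x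
  proof -
    have "kbar P (max_corr_kernel P K f) x = (\<Sum>i<K. Ef i * f i x)"
    proof -
      have "kbar P (max_corr_kernel P K f) x = (\<Sum>x0\<in>UNIV. \<Sum>i<K. f i x * (M x0 * f i x0))"
        unfolding kbar_def expX_def ker M_def
        by (rule sum.cong[OF refl]) (simp add: sum_distrib_left mult_ac)
      also have "\<dots> = (\<Sum>i<K. f i x * Ef i)" by (simp only: swap_helper Ef_def)
      finally show ?thesis by (simp add: mult_ac)
    qed
    also have "\<dots> = 0" using Ef0 by simp
    finally show ?thesis .
  qed
  have cen: "centered_kernel P (max_corr_kernel P K f) x0 x = (\<Sum>i<K. f i x0 * f i x)" for x0 x
  proof -
    have kb': "kbar P (max_corr_kernel P K f) = (\<lambda>_. 0)" by (rule ext) (rule kb)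
    show ?thesis unfolding centered_kernel_def kb' ker by (simp add: expX_def)
  qed
  have cond: "condExpX P (\<lambda>x0. centered_kernel P (max_corr_kernel P K f) x0 x) y
      = (\<Sum>i<K. \<sigma> i * f i x * g i y)" for x y
  proof -
    have Ny: "N y \<noteq> 0" using posY[of y] unfolding N_def by simp
    have inner: "(\<Sum>x0\<in>UNIV. P x0 y * f i x0) = N y * \<sigma> i * g i y" if i: "i < K" for i
    proof -
      have "(\<Sum>x0\<in>UNIV. P x0 y * f i x0) = N y * (Ef i + (\<Sum>j<K. \<sigma> j * g j y * (\<Sum>x0\<in>UNIV. M x0 * (f j x0 * f i x0))))"
      proof -
        have "(\<Sum>x0\<in>UNIV. P x0 y * f i x0) = (\<Sum>x0\<in>UNIV. N y * (M x0 * f i x0) + (\<Sum>j<K. (N y * \<sigma> j * g j y) * (M x0 * (f j x0 * f i x0))))"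
          by (rule sum.cong[OF refl], subst dec) (simp add: algebra_simps sum_distrib_left sum_distrib_right)
        also have "\<dots> = N y * Ef i + (\<Sum>j<K. (N y * \<sigma> j * g j y) * (\<Sum>x0\<in>UNIV. M x0 * (f j x0 * f i x0)))"
          by (simp only: sum.distrib sum_distrib_left[symmetric] swap_helper Ef_def)
        finally show ?thesis by (simp add: algebra_simps sum_distrib_left)
      qed
      also have "(\<Sum>j<K. \<sigma> j * g j y * (\<Sum>x0\<in>UNIV. M x0 * (f j x0 * f i x0))) = (\<Sum>j<K. if j = i then \<sigma> j * g j y else 0)"
        by (rule sum.cong) (auto simp: orth i)
      also have "\<dots> = \<sigma> i * g i y" using i by (simp add: sum.delta')
      finally show ?thesis using Ef0[OF i] by simp
    qed
    have "condExpX P (\<lambda>x0. centered_kernel P (max_corr_kernel P K f) x0 x) y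
        = (\<Sum>i<K. f i x * (\<Sum>x0\<in>UNIV. P x0 y * f i x0) / N y)"
    proof -
      have "condExpX P (\<lambda>x0. centered_kernel P (max_corr_kernel P K f) x0 x) y
          = (\<Sum>x0\<in>UNIV. \<Sum>i<K. (f i x / N y) * (P x0 y * f i x0))"
        unfolding condExpX_def cen N_def[symmetric]
        by (rule sum.cong[OF refl]) (simp add: sum_distrib_left mult_ac)
      also have "\<dots> = (\<Sum>i<K. (f i x / N y) * (\<Sum>x0\<in>UNIV. P x0 y * f i x0))"
        by (simp only: swap_helper)
      finally show ?thesis by (simp add: mult_ac)
    qed
    also have "\<dots> = (\<Sum>i<K. \<sigma> i * f i x * g i y)"
      by (rule sum.cong) (auto simp: inner Ny)
    finally show ?thesis .
  qed
  have part1: "\<forall>x y. condYX P y x = kernel_model P (max_corr_kernel P K f) y x"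
  proof (intro allI)
    fix x y
    have Mx: "M x \<noteq> 0" using posX[of x] unfolding M_def by simp
    show "condYX P y x = kernel_model P (max_corr_kernel P K f) y x"
      unfolding condYX_def kernel_model_def cond M_def[symmetric] N_def[symmetric]
      using Mx by (subst dec) simp
  qed
  show ?thesis using part1 by simp
qed

end
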